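(* Let $T=\mathrm{diag}(t_1,t_2,t_3)$ be a real diagonal matrix with $t_1t_2t_3\neq0$, and define $N_T>0$ by $N_T^{-1}=\int_{S^2}(\boldsymbol n^\intercal T^{-2}\boldsymbol n)^{-2}\,\mathrm{d}^2\boldsymbol n$. Then \[ N_T\,|\det T|\int_{S^2}\sqrt{\boldsymbol n^\intercal T^{2}\boldsymbol n}\;\mathrm{d}^2\boldsymbol n = 1 . \] Consequently, $2\pi N_T|\det T|=1$ holds if and only if $\int_{S^2}\sqrt{\boldsymbol n^\intercal T^{2}\boldsymbol n}\,\mathrm{d}^2\boldsymbol n=2\pi$.
   Context: $S^2$ is the unit sphere in $\mathbb{R}^3$ with its standard surface measure $\mathrm{d}^2\boldsymbol n$. *)

theory Defs
  imports "HOL-Analysis.Analysis"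
begin

definition sphere_pt :: "real \<Rightarrow> real \<Rightarrow> real^3" where
  "sphere_pt th ph = vector [sin th * cos ph, sin th * sin ph, cos th]"

definition sphere_integral :: "(real^3 \<Rightarrow> real) \<Rightarrow> real" where
  "sphere_integral f =
     (LINT p : {0..pi} \<times> {0..2*pi} | lborel.
        f (sphere_pt (fst p) (snd p)) * sin (fst p))"

definition diag3 :: "real^3 \<Rightarrow> real^3^3" where
  "diag3 t = (\<chi> i j. if i = j then t $ i else 0)"

end

theory Submission
  imports Defs
begin


definition psi :: "real \<Rightarrow> real \<Rightarrow> real \<Rightarrow> real" where
  "psi a b x = x + arctan ((b - a) * sin x * cos x / (a * (cos x)\<^sup>2 + b * (sin x)\<^sup>2))"

lemma D_pos: fixes x :: real assumes "a > 0" "b > 0" shows "a * (cos x)\<^sup>2 + b * (sin x)\<^sup>2 > 0"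
proof -
  have "(cos x)\<^sup>2 + (sin x)\<^sup>2 = 1" by (rule sin_cos_squared_add2)
  hence "(cos x)\<^sup>2 > 0 \<or> (sin x)\<^sup>2 > 0" by (smt (verit) zero_le_power2)
  thus ?thesis using assms by (smt (verit) mult_pos_pos mult_nonneg_nonneg zero_le_power2)
qed

lemma alg_deriv:
  fixes a b c s :: real
  assumes cs: "c\<^sup>2 + s\<^sup>2 = 1" and D: "a * c\<^sup>2 + b * s\<^sup>2 \<noteq> 0" and E: "a\<^sup>2 * c\<^sup>2 + b\<^sup>2 * s\<^sup>2 \<noteq> 0"
  shows "1 + inverse (1 + ((b - a) * s * c / (a * c\<^sup>2 + b * s\<^sup>2))\<^sup>2) *
      (((b - a) * (c * c - s * s) * (a * c\<^sup>2 + b * s\<^sup>2) - (b - a) * s * c * (2 * (b - a) * s * c))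
        / (a * c\<^sup>2 + b * s\<^sup>2)\<^sup>2)
    = a * b / (a\<^sup>2 * c\<^sup>2 + b\<^sup>2 * s\<^sup>2)"
proof -
  have 1: "1 + ((b - a) * s * c / (a * c\<^sup>2 + b * s\<^sup>2))\<^sup>2
     = (a\<^sup>2 * c\<^sup>2 + b\<^sup>2 * s\<^sup>2) / (a * c\<^sup>2 + b * s\<^sup>2)\<^sup>2"
  proof -
    have "(a * c\<^sup>2 + b * s\<^sup>2)\<^sup>2 + ((b - a) * s * c)\<^sup>2 = (a\<^sup>2 * c\<^sup>2 + b\<^sup>2 * s\<^sup>2) * (c\<^sup>2 + s\<^sup>2)"
      by (simp add: power2_eq_square algebra_simps)
    with cs D show ?thesis by (simp add: field_simps power_divide)
  qed
  have s2: "s\<^sup>2 = 1 - c\<^sup>2" using cs by simp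
  have key: "a\<^sup>2 * c\<^sup>2 + b\<^sup>2 * s\<^sup>2 + ((b - a) * (c * c - s * s) * (a * c\<^sup>2 + b * s\<^sup>2) - (b - a) * s * c * (2 * (b - a) * s * c)) = a * b"
    using cs by algebra
  have gen: "\<And>EE DD NN. EE \<noteq> 0 \<Longrightarrow> DD \<noteq> 0 \<Longrightarrow> EE + NN = a * b \<Longrightarrow>
      1 + inverse (EE / DD\<^sup>2) * (NN / DD\<^sup>2) = a * b / EE"
    by (simp add: field_simps)
  show ?thesis unfolding 1 by (rule gen[OF E D key])
qed

lemma psi_deriv:
  fixes x :: real
  assumes "a > 0" "b > 0"
  shows "(psi a b has_real_derivative (a * b / (a\<^sup>2 * (cos x)\<^sup>2 + b\<^sup>2 * (sin x)\<^sup>2))) (at x)"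
proof -
  have D: "a * (cos x)\<^sup>2 + b * (sin x)\<^sup>2 \<noteq> 0" using D_pos[OF assms, of x] by linarith
  have E: "a\<^sup>2 * (cos x)\<^sup>2 + b\<^sup>2 * (sin x)\<^sup>2 \<noteq> 0" using D_pos[of "a\<^sup>2" "b\<^sup>2" x] assms by simp
  have z: "((\<lambda>x. (b - a) * sin x * cos x / (a * (cos x)\<^sup>2 + b * (sin x)\<^sup>2)) has_real_derivative
      (((b - a) * (cos x * cos x - sin x * sin x) * (a * (cos x)\<^sup>2 + b * (sin x)\<^sup>2)
        - (b - a) * sin x * cos x * (2 * (b - a) * sin x * cos x))
        / (a * (cos x)\<^sup>2 + b * (sin x)\<^sup>2)\<^sup>2)) (at x)"
    apply (rule derivative_eq_intros refl)+
    using D apply (simp_all add: power2_eq_square field_simps)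
    done
  have "(psi a b has_real_derivative (1 + inverse (1 + ((b - a) * sin x * cos x / (a * (cos x)\<^sup>2 + b * (sin x)\<^sup>2))\<^sup>2) *
      (((b - a) * (cos x * cos x - sin x * sin x) * (a * (cos x)\<^sup>2 + b * (sin x)\<^sup>2)
        - (b - a) * sin x * cos x * (2 * (b - a) * sin x * cos x))
        / (a * (cos x)\<^sup>2 + b * (sin x)\<^sup>2)\<^sup>2))) (at x)"
    unfolding psi_def
    by (intro DERIV_add DERIV_ident DERIV_arctan[THEN DERIV_chain2] z)
  thus ?thesis using alg_deriv[OF sin_cos_squared_add2 D E] by simp
qed

lemma psi_cos_sin:
  fixes x :: real
  assumes "a > 0" "b > 0"
  shows "cos (psi a b x) = a * cos x / sqrt (a\<^sup>2 * (cos x)\<^sup>2 + b\<^sup>2 * (sin x)\<^sup>2)"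
    and "sin (psi a b x) = b * sin x / sqrt (a\<^sup>2 * (cos x)\<^sup>2 + b\<^sup>2 * (sin x)\<^sup>2)"
proof -
  define c s where "c = cos x" and "s = sin x"
  have cs: "c\<^sup>2 + s\<^sup>2 = 1" unfolding c_def s_def by simp
  define D where "D = a * c\<^sup>2 + b * s\<^sup>2"
  define E where "E = a\<^sup>2 * c\<^sup>2 + b\<^sup>2 * s\<^sup>2"
  have Dp: "D > 0" unfolding D_def c_def s_def using D_pos[OF assms] .
  have Ep: "E > 0" unfolding E_def c_def s_def using D_pos[of "a\<^sup>2" "b\<^sup>2" x] assms by simp
  define z where "z = (b - a) * s * c / D"
  have 1: "1 + z\<^sup>2 = E / D\<^sup>2"
  proof -
    have "D\<^sup>2 + ((b - a) * s * c)\<^sup>2 = E * (c\<^sup>2 + s\<^sup>2)"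
      unfolding D_def E_def by (simp add: power2_eq_square algebra_simps)
    with cs Dp show ?thesis unfolding z_def by (simp add: field_simps power_divide)
  qed
  have sq: "sqrt (1 + z\<^sup>2) = sqrt E / D"
    unfolding 1 using Dp Ep by (simp add: real_sqrt_divide)
  have ps: "psi a b x = x + arctan z" unfolding psi_def z_def D_def c_def s_def by simp
  have "cos (psi a b x) = c * (1 / sqrt (1 + z\<^sup>2)) - s * (z / sqrt (1 + z\<^sup>2))"
    unfolding ps cos_add cos_arctan sin_arctan c_def s_def by simp
  also have "\<dots> = (c * D - s * (b - a) * s * c) / sqrt E"
    unfolding sq unfolding z_def using Dp Ep by (simp add: field_simps)
  also have "c * D - s * (b - a) * s * c = a * c"
    unfolding D_def using cs by algebra
  finally show "cos (psi a b x) = a * cos x / sqrt (a\<^sup>2 * (cos x)\<^sup>2 + b\<^sup>2 * (sin x)\<^sup>2)"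
    unfolding E_def c_def s_def .
  have "sin (psi a b x) = s * (1 / sqrt (1 + z\<^sup>2)) + c * (z / sqrt (1 + z\<^sup>2))"
    unfolding ps sin_add cos_arctan sin_arctan c_def s_def by simp
  also have "\<dots> = (s * D + c * (b - a) * s * c) / sqrt E"
    unfolding sq unfolding z_def using Dp Ep by (simp add: field_simps)
  also have "s * D + c * (b - a) * s * c = b * s"
    unfolding D_def using cs by algebra
  finally show "sin (psi a b x) = b * sin x / sqrt (a\<^sup>2 * (cos x)\<^sup>2 + b\<^sup>2 * (sin x)\<^sup>2)"
    unfolding E_def c_def s_def .
qed

lemma psi_0: "psi a b 0 = 0" by (simp add: psi_def)
lemma psi_pi: "psi a b pi = pi" by (simp add: psi_def)
lemma psi_2pi: "psi a b (2*pi) = 2*pi" by (simp add: psi_def)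




lemma iter:
  fixes h :: "real \<times> real \<Rightarrow> ennreal"
  assumes hm: "h \<in> borel_measurable borel" and A: "A \<in> sets borel" and C: "C \<in> sets borel"
  shows "(\<integral>\<^sup>+p. h p * indicator (A \<times> C) p \<partial>lborel)
       = (\<integral>\<^sup>+y. (\<integral>\<^sup>+x. h (x,y) * indicator A x \<partial>lborel) * indicator C y \<partial>lborel)"
proof -
  have m: "(\<lambda>p. h p * indicator (A \<times> C) p) \<in> borel_measurable (lborel \<Otimes>\<^sub>M lborel)"
  proof -
    have AC: "A \<times> C \<in> sets (borel :: (real \<times> real) measure)"
      using A C by (metis borel_prod pair_measureI)
    show ?thesis unfolding lborel_prod measurable_lborel1
      by (intro borel_measurable_times_ennreal borel_measurable_indicator) (use hm AC in simp_all)
  qed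
  have "(\<integral>\<^sup>+p. h p * indicator (A \<times> C) p \<partial>lborel)
      = (\<integral>\<^sup>+p. h p * indicator (A \<times> C) p \<partial>(lborel \<Otimes>\<^sub>M lborel))" by (simp add: lborel_prod)
  also have "\<dots> = (\<integral>\<^sup>+y. \<integral>\<^sup>+x. h (x,y) * indicator (A \<times> C) (x,y) \<partial>lborel \<partial>lborel)"
    by (rule lborel_pair.nn_integral_snd[symmetric, OF m])
  also have "\<dots> = (\<integral>\<^sup>+y. (\<integral>\<^sup>+x. h (x,y) * indicator A x \<partial>lborel) * indicator C y \<partial>lborel)"
  proof (rule nn_integral_cong)
    fix y
    have "(\<integral>\<^sup>+x. h (x,y) * indicator (A \<times> C) (x,y) \<partial>lborel)
        = (\<integral>\<^sup>+x. h (x,y) * indicator A x * indicator C y \<partial>lborel)"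
      by (rule nn_integral_cong) (simp add: indicator_def)
    also have "\<dots> = (\<integral>\<^sup>+x. h (x,y) * indicator A x \<partial>lborel) * indicator C y"
      by (rule nn_integral_multc) (use hm A in measurable)
    finally show "(\<integral>\<^sup>+x. h (x,y) * indicator (A \<times> C) (x,y) \<partial>lborel)
        = (\<integral>\<^sup>+x. h (x,y) * indicator A x \<partial>lborel) * indicator C y" .
  qed
  finally show ?thesis .
qed




definition F1 :: "real \<Rightarrow> real \<Rightarrow> real \<Rightarrow> real \<Rightarrow> real \<Rightarrow> real" where
  "F1 a b c th ph = sin th / ((sin th * cos ph)\<^sup>2 / a\<^sup>2 + (sin th * sin ph)\<^sup>2 / b\<^sup>2 + (cos th)\<^sup>2 / c\<^sup>2)\<^sup>2"
definition F2 :: "real \<Rightarrow> real \<Rightarrow> real \<Rightarrow> real \<Rightarrow> real \<Rightarrow> real" where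
  "F2 a b c th ph = sin th * sqrt (a\<^sup>2 * (sin th * cos ph)\<^sup>2 + b\<^sup>2 * (sin th * sin ph)\<^sup>2 + c\<^sup>2 * (cos th)\<^sup>2)"
definition rho :: "real \<Rightarrow> real \<Rightarrow> real \<Rightarrow> real" where
  "rho a b ph = sqrt (a\<^sup>2 * (cos ph)\<^sup>2 + b\<^sup>2 * (sin ph)\<^sup>2)"

lemma rho_pos: "a > 0 \<Longrightarrow> b > 0 \<Longrightarrow> rho a b ph > 0"
  unfolding rho_def using D_pos[of "a\<^sup>2" "b\<^sup>2" ph] by simp

lemma alg_point:
  fixes a b c r L st ct sp cp :: real
  assumes a: "a > 0" and b: "b > 0" and c: "c > 0" and r: "r > 0" and L: "L > 0"
    and t1: "st\<^sup>2 + ct\<^sup>2 = 1" and p1: "sp\<^sup>2 + cp\<^sup>2 = 1"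
    and r2: "r\<^sup>2 = a\<^sup>2 * cp\<^sup>2 + b\<^sup>2 * sp\<^sup>2" and L2: "L\<^sup>2 = c\<^sup>2 * ct\<^sup>2 + r\<^sup>2 * st\<^sup>2"
  shows "(r * st / L) / ((r * st / L * (a * cp / r))\<^sup>2 / a\<^sup>2 + (r * st / L * (b * sp / r))\<^sup>2 / b\<^sup>2 + (c * ct / L)\<^sup>2 / c\<^sup>2)\<^sup>2
      * (c * r / L\<^sup>2) * (a * b / r\<^sup>2)
    = a * b * c * (st * L)"
proof -
  have q: "(r * st / L * (a * cp / r))\<^sup>2 / a\<^sup>2 + (r * st / L * (b * sp / r))\<^sup>2 / b\<^sup>2 + (c * ct / L)\<^sup>2 / c\<^sup>2 = 1 / L\<^sup>2"
  proof -
    have "(r * st / L * (a * cp / r))\<^sup>2 / a\<^sup>2 + (r * st / L * (b * sp / r))\<^sup>2 / b\<^sup>2 + (c * ct / L)\<^sup>2 / c\<^sup>2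
        = (st\<^sup>2 * (sp\<^sup>2 + cp\<^sup>2) + ct\<^sup>2) / L\<^sup>2"
      using a b c r L by (simp add: field_simps power2_eq_square)
    thus ?thesis using t1 p1 by simp
  qed
  show ?thesis unfolding q using a b c r L by (simp add: field_simps power2_eq_square)
qed

lemma pointwise:
  assumes a: "a > 0" and b: "b > 0" and c: "c > 0"
  shows "F1 a b c (psi c (rho a b ph) th) (psi a b ph)
       * (c * rho a b ph / (c\<^sup>2 * (cos th)\<^sup>2 + (rho a b ph)\<^sup>2 * (sin th)\<^sup>2))
       * (a * b / (a\<^sup>2 * (cos ph)\<^sup>2 + b\<^sup>2 * (sin ph)\<^sup>2))
     = a * b * c * F2 a b c th ph"
proof -
  define r where "r = rho a b ph"
  have r: "r > 0" unfolding r_def using rho_pos[OF a b] .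
  define L where "L = sqrt (c\<^sup>2 * (cos th)\<^sup>2 + r\<^sup>2 * (sin th)\<^sup>2)"
  have L: "L > 0" unfolding L_def using D_pos[of "c\<^sup>2" "r\<^sup>2" th] c r by simp
  have r2: "r\<^sup>2 = a\<^sup>2 * (cos ph)\<^sup>2 + b\<^sup>2 * (sin ph)\<^sup>2" unfolding r_def rho_def
    by (simp add: add_pos_pos)
  have L2: "L\<^sup>2 = c\<^sup>2 * (cos th)\<^sup>2 + r\<^sup>2 * (sin th)\<^sup>2" unfolding L_def
    by (simp add: add_pos_pos)
  have cP: "cos (psi a b ph) = a * cos ph / r" and sP: "sin (psi a b ph) = b * sin ph / r"
    using psi_cos_sin[OF a b, of ph] unfolding r_def rho_def by auto
  have cT: "cos (psi c r th) = c * cos th / L" and sT: "sin (psi c r th) = r * sin th / L"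
    using psi_cos_sin[OF c r, of th] unfolding L_def by auto
  have F2e: "F2 a b c th ph = sin th * L"
  proof -
    have "a\<^sup>2 * (sin th * cos ph)\<^sup>2 + b\<^sup>2 * (sin th * sin ph)\<^sup>2 + c\<^sup>2 * (cos th)\<^sup>2
        = c\<^sup>2 * (cos th)\<^sup>2 + r\<^sup>2 * (sin th)\<^sup>2" unfolding r2 by (simp add: algebra_simps power_mult_distrib)
    thus ?thesis unfolding F2_def L_def by simp
  qed
  show ?thesis
    unfolding r_def[symmetric] F1_def cP sP cT sT F2e r2[symmetric]
    unfolding L2[symmetric]
    by (rule alg_point[OF a b c r L _ _ r2 L2]) simp_all
qed




lemma denom_pos:
  fixes a b c th ph :: real
  assumes a: "a > 0" and b: "b > 0" and c: "c > 0"
  shows "(sin th * cos ph)\<^sup>2 / a\<^sup>2 + (sin th * sin ph)\<^sup>2 / b\<^sup>2 + (cos th)\<^sup>2 / c\<^sup>2 > 0"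
proof -
  define K where "K = 1/a\<^sup>2 * (cos ph)\<^sup>2 + 1/b\<^sup>2 * (sin ph)\<^sup>2"
  have K: "K > 0" unfolding K_def using D_pos[of "1/a\<^sup>2" "1/b\<^sup>2" ph] a b by simp
  have "(sin th * cos ph)\<^sup>2 / a\<^sup>2 + (sin th * sin ph)\<^sup>2 / b\<^sup>2 + (cos th)\<^sup>2 / c\<^sup>2
     = 1/c\<^sup>2 * (cos th)\<^sup>2 + K * (sin th)\<^sup>2"
    unfolding K_def by (simp add: field_simps power_mult_distrib)
  also have "\<dots> > 0" using D_pos[of "1/c\<^sup>2" K th] c K by simp
  finally show ?thesis .
qed

lemma F1_cont:
  assumes a: "a > 0" and b: "b > 0" and c: "c > 0"
  shows "continuous_on UNIV (\<lambda>p. F1 a b c (fst p) (snd p))"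
proof -
  have nz: "\<And>p. ((sin (fst p) * cos (snd p))\<^sup>2 / a\<^sup>2 + (sin (fst p) * sin (snd p))\<^sup>2 / b\<^sup>2 + (cos (fst p))\<^sup>2 / c\<^sup>2)\<^sup>2 \<noteq> 0"
    using denom_pos[OF a b c] by (metis less_irrefl zero_less_power)
  show ?thesis unfolding F1_def
    by (intro continuous_intros) (use nz a b c in auto)
qed

lemma F2_cont:
  shows "continuous_on UNIV (\<lambda>p. F2 a b c (fst p) (snd p))"
  unfolding F2_def by (intro continuous_intros)

lemma F1_meas_swap:
  assumes a: "a > 0" and b: "b > 0" and c: "c > 0"
  shows "(\<lambda>p. F1 a b c (snd p) (fst p)) \<in> borel_measurable (borel \<Otimes>\<^sub>M lborel)"
proof -
  have "(\<lambda>p. (\<lambda>x y. F1 a b c x y) (snd p) (fst p)) \<in> borel_measurable (borel \<Otimes>\<^sub>M lborel)"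
    by (rule borel_measurable_continuous_Pair[OF _ _ F1_cont[OF a b c]]) auto
  thus ?thesis by simp
qed

lemma H_meas:
  assumes a: "a > 0" and b: "b > 0" and c: "c > 0"
  shows "(\<lambda>ph. \<integral>\<^sup>+th. ennreal (F1 a b c th ph) * indicator {0..pi} th \<partial>lborel) \<in> borel_measurable borel"
proof -
  have [measurable]: "(\<lambda>p. F1 a b c (snd p) (fst p)) \<in> borel_measurable (borel \<Otimes>\<^sub>M lborel)"
    by (rule F1_meas_swap[OF a b c])
  show ?thesis by measurable
qed




lemma inner_subst:
  assumes a: "a > 0" and b: "b > 0" and c: "c > 0"
  shows "(\<integral>\<^sup>+th. ennreal (F1 a b c th (psi a b ph)) * indicator {0..pi} th \<partial>lborel)
         * ennreal (a * b / (a\<^sup>2 * (cos ph)\<^sup>2 + b\<^sup>2 * (sin ph)\<^sup>2))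
       = (\<integral>\<^sup>+th. ennreal (a * b * c * F2 a b c th ph) * indicator {0..pi} th \<partial>lborel)"
proof -
  define r where "r = rho a b ph"
  have r: "r > 0" unfolding r_def using rho_pos[OF a b] .
  define g' where "g' = (\<lambda>th. c * r / (c\<^sup>2 * (cos th)\<^sup>2 + r\<^sup>2 * (sin th)\<^sup>2))"
  have fm: "(\<lambda>th. ennreal (F1 a b c th (psi a b ph))) \<in> borel_measurable borel"
  proof -
    have "(\<lambda>th. (\<lambda>x y. F1 a b c x y) th (psi a b ph)) \<in> borel_measurable borel"
      by (rule borel_measurable_continuous_Pair[OF _ _ F1_cont[OF a b c]]) auto
    thus ?thesis by measurable
  qed
  have "(\<integral>\<^sup>+th. ennreal (F1 a b c th (psi a b ph)) * indicator {psi c r 0..psi c r pi} th \<partial>lborel)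
      = (\<integral>\<^sup>+th. ennreal (F1 a b c (psi c r th) (psi a b ph)) * ennreal (g' th) * indicator {0..pi} th \<partial>lborel)"
  proof (rule nn_integral_substitution_aux[OF fm])
    show "\<And>x. x \<in> {0..pi} \<Longrightarrow> (psi c r has_real_derivative g' x) (at x)"
      unfolding g'_def using psi_deriv[OF c r] by simp
    show "continuous_on {0..pi} g'"
      unfolding g'_def using D_pos[of "c\<^sup>2" "r\<^sup>2"] c r
      by (intro continuous_intros) (auto simp: less_imp_neq[symmetric])
    show "\<And>x. x \<in> {0..pi} \<Longrightarrow> 0 \<le> g' x"
      unfolding g'_def using D_pos[of "c\<^sup>2" "r\<^sup>2"] c r by (auto intro!: divide_nonneg_pos)
  qed (auto simp: pi_gt_zero)
  hence 1: "(\<integral>\<^sup>+th. ennreal (F1 a b c th (psi a b ph)) * indicator {0..pi} th \<partial>lborel)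
      = (\<integral>\<^sup>+th. ennreal (F1 a b c (psi c r th) (psi a b ph)) * ennreal (g' th) * indicator {0..pi} th \<partial>lborel)"
    by (simp add: psi_0 psi_pi)
  define Ph where "Ph = a * b / (a\<^sup>2 * (cos ph)\<^sup>2 + b\<^sup>2 * (sin ph)\<^sup>2)"
  have Ph: "Ph > 0" unfolding Ph_def using D_pos[of "a\<^sup>2" "b\<^sup>2" ph] a b by simp
  have gp: "g' th > 0" for th unfolding g'_def using D_pos[of "c\<^sup>2" "r\<^sup>2" th] c r by simp
  have "(\<integral>\<^sup>+th. ennreal (F1 a b c (psi c r th) (psi a b ph)) * ennreal (g' th) * indicator {0..pi} th \<partial>lborel) * ennreal Ph
     = (\<integral>\<^sup>+th. ennreal (F1 a b c (psi c r th) (psi a b ph)) * ennreal (g' th) * indicator {0..pi} th * ennreal Ph \<partial>lborel)"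
  proof (rule nn_integral_multc[symmetric])
    have pc: "continuous_on UNIV (psi c r)"
      using psi_deriv[OF c r] by (meson DERIV_isCont continuous_at_imp_continuous_on)
    have [measurable]: "psi c r \<in> borel_measurable borel"
      by (rule borel_measurable_continuous_onI[OF pc])
    have [measurable]: "(\<lambda>th. (\<lambda>x y. F1 a b c x y) (psi c r th) (psi a b ph)) \<in> borel_measurable borel"
      by (rule borel_measurable_continuous_Pair[OF _ _ F1_cont[OF a b c]]) auto
    have [measurable]: "g' \<in> borel_measurable borel"
      unfolding g'_def using D_pos[of "c\<^sup>2" "r\<^sup>2"] c r
      by (intro borel_measurable_continuous_onI continuous_intros) (auto simp: less_imp_neq[symmetric])
    show "(\<lambda>th. ennreal (F1 a b c (psi c r th) (psi a b ph)) * ennreal (g' th) * indicator {0..pi} th) \<in> borel_measurable lborel"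
      unfolding measurable_lborel1 by measurable
  qed
  also have "\<dots> = (\<integral>\<^sup>+th. ennreal (a * b * c * F2 a b c th ph) * indicator {0..pi} th \<partial>lborel)"
  proof (rule nn_integral_cong)
    fix th
    have "ennreal (F1 a b c (psi c r th) (psi a b ph)) * ennreal (g' th) * ennreal Ph
        = ennreal (F1 a b c (psi c r th) (psi a b ph) * g' th * Ph)"
      using gp[of th] Ph by (simp add: ennreal_mult'')
    also have "F1 a b c (psi c r th) (psi a b ph) * g' th * Ph = a * b * c * F2 a b c th ph"
      unfolding g'_def Ph_def r_def by (rule pointwise[OF a b c])
    finally have eq: "ennreal (F1 a b c (psi c r th) (psi a b ph)) * ennreal (g' th) * ennreal Ph
        = ennreal (a * b * c * F2 a b c th ph)" .
    have "ennreal (F1 a b c (psi c r th) (psi a b ph)) * ennreal (g' th) * indicator {0..pi} th * ennreal Ph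
        = (ennreal (F1 a b c (psi c r th) (psi a b ph)) * ennreal (g' th) * ennreal Ph) * indicator {0..pi} th"
      by (simp only: ac_simps)
    thus "ennreal (F1 a b c (psi c r th) (psi a b ph)) * ennreal (g' th) * indicator {0..pi} th * ennreal Ph
        = ennreal (a * b * c * F2 a b c th ph) * indicator {0..pi} th"
      unfolding eq .
  qed
  finally show ?thesis unfolding 1 Ph_def .
qed




lemma key_nn:
  assumes a: "a > 0" and b: "b > 0" and c: "c > 0"
  shows "(\<integral>\<^sup>+p. ennreal (F1 a b c (fst p) (snd p)) * indicator ({0..pi} \<times> {0..2*pi}) p \<partial>lborel)
       = ennreal (a * b * c) * (\<integral>\<^sup>+p. ennreal (F2 a b c (fst p) (snd p)) * indicator ({0..pi} \<times> {0..2*pi}) p \<partial>lborel)"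
proof -
  define H where "H = (\<lambda>ph. \<integral>\<^sup>+th. ennreal (F1 a b c th ph) * indicator {0..pi} th \<partial>lborel)"
  have Hm: "H \<in> borel_measurable borel" unfolding H_def by (rule H_meas[OF a b c])
  have m1: "(\<lambda>p. ennreal (F1 a b c (fst p) (snd p))) \<in> borel_measurable borel"
    using borel_measurable_continuous_onI[OF F1_cont[OF a b c]] by measurable
  have m2: "(\<lambda>p. ennreal (a * b * c * F2 a b c (fst p) (snd p))) \<in> borel_measurable borel"
    using borel_measurable_continuous_onI[OF F2_cont[of a b c]] by measurable
  have "(\<integral>\<^sup>+p. ennreal (F1 a b c (fst p) (snd p)) * indicator ({0..pi} \<times> {0..2*pi}) p \<partial>lborel)
      = (\<integral>\<^sup>+ph. H ph * indicator {0..2*pi} ph \<partial>lborel)"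
    unfolding H_def using iter[OF m1] by simp
  also have "\<dots> = (\<integral>\<^sup>+ph. H (psi a b ph) * ennreal (a * b / (a\<^sup>2 * (cos ph)\<^sup>2 + b\<^sup>2 * (sin ph)\<^sup>2))
                       * indicator {0..2*pi} ph \<partial>lborel)"
  proof -
    have "(\<integral>\<^sup>+ph. H ph * indicator {psi a b 0..psi a b (2*pi)} ph \<partial>lborel)
      = (\<integral>\<^sup>+ph. H (psi a b ph) * ennreal (a * b / (a\<^sup>2 * (cos ph)\<^sup>2 + b\<^sup>2 * (sin ph)\<^sup>2))
                       * indicator {0..2*pi} ph \<partial>lborel)"
    proof (rule nn_integral_substitution_aux[OF Hm])
      show "\<And>x. x \<in> {0..2*pi} \<Longrightarrow> (psi a b has_real_derivative (a * b / (a\<^sup>2 * (cos x)\<^sup>2 + b\<^sup>2 * (sin x)\<^sup>2))) (at x)"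
        using psi_deriv[OF a b] by simp
      show "continuous_on {0..2*pi} (\<lambda>x. a * b / (a\<^sup>2 * (cos x)\<^sup>2 + b\<^sup>2 * (sin x)\<^sup>2))"
        using D_pos[of "a\<^sup>2" "b\<^sup>2"] a b
        by (intro continuous_intros) (auto simp: less_imp_neq[symmetric])
      show "\<And>x. x \<in> {0..2*pi} \<Longrightarrow> 0 \<le> a * b / (a\<^sup>2 * (cos x)\<^sup>2 + b\<^sup>2 * (sin x)\<^sup>2)"
        using D_pos[of "a\<^sup>2" "b\<^sup>2"] a b by (auto intro!: divide_nonneg_pos)
    qed (auto simp: pi_gt_zero)
    thus ?thesis by (simp add: psi_0 psi_2pi)
  qed
  also have "\<dots> = (\<integral>\<^sup>+ph. (\<integral>\<^sup>+th. ennreal (a * b * c * F2 a b c th ph) * indicator {0..pi} th \<partial>lborel)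
                       * indicator {0..2*pi} ph \<partial>lborel)"
    unfolding H_def by (simp add: inner_subst[OF a b c])
  also have "\<dots> = (\<integral>\<^sup>+p. ennreal (a * b * c * F2 a b c (fst p) (snd p)) * indicator ({0..pi} \<times> {0..2*pi}) p \<partial>lborel)"
    using iter[OF m2] by simp
  also have "\<dots> = (\<integral>\<^sup>+p. ennreal (a * b * c) * (ennreal (F2 a b c (fst p) (snd p)) * indicator ({0..pi} \<times> {0..2*pi}) p) \<partial>lborel)"
    using a b c by (intro nn_integral_cong) (simp add: ennreal_mult' mult.assoc)
  also have "\<dots> = ennreal (a * b * c) * (\<integral>\<^sup>+p. ennreal (F2 a b c (fst p) (snd p)) * indicator ({0..pi} \<times> {0..2*pi}) p \<partial>lborel)"
  proof (rule nn_integral_cmult)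
    have "(\<lambda>p. ennreal (F2 a b c (fst p) (snd p))) \<in> borel_measurable borel"
      using borel_measurable_continuous_onI[OF F2_cont[of a b c]] by measurable
    moreover have "{0..pi} \<times> {0..2*pi} \<in> sets (borel :: (real \<times> real) measure)"
      by (metis borel_prod pair_measureI sets_lborel atLeastAtMost_borel)
    ultimately show "(\<lambda>p. ennreal (F2 a b c (fst p) (snd p)) * indicator ({0..pi} \<times> {0..2*pi}) p) \<in> borel_measurable lborel"
      by (intro borel_measurable_times_ennreal borel_measurable_indicator) simp_all
  qed
  finally show ?thesis .
qed




lemma F2_pos:
  assumes a: "a > 0" and b: "b > 0" and c: "c > 0" and th: "0 < th" "th < pi"
  shows "F2 a b c th ph > 0"
proof -
  have s: "sin th > 0" using th by (simp add: sin_gt_zero)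
  define K where "K = a\<^sup>2 * (cos ph)\<^sup>2 + b\<^sup>2 * (sin ph)\<^sup>2"
  have K: "K > 0" unfolding K_def using D_pos[of "a\<^sup>2" "b\<^sup>2" ph] a b by simp
  have "a\<^sup>2 * (sin th * cos ph)\<^sup>2 + b\<^sup>2 * (sin th * sin ph)\<^sup>2 + c\<^sup>2 * (cos th)\<^sup>2
     = c\<^sup>2 * (cos th)\<^sup>2 + K * (sin th)\<^sup>2"
    unfolding K_def by (simp add: algebra_simps power_mult_distrib)
  also have "\<dots> > 0" using D_pos[of "c\<^sup>2" K th] c K by simp
  finally show ?thesis unfolding F2_def using s by simp
qed

lemma NN2_pos:
  assumes a: "a > 0" and b: "b > 0" and c: "c > 0"
  shows "(\<integral>\<^sup>+p. ennreal (F2 a b c (fst p) (snd p)) * indicator ({0..pi} \<times> {0..2*pi}) p \<partial>lborel) \<noteq> 0"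
proof
  assume 0: "(\<integral>\<^sup>+p. ennreal (F2 a b c (fst p) (snd p)) * indicator ({0..pi} \<times> {0..2*pi}) p \<partial>lborel) = 0"
  have Bs: "{0..pi} \<times> {0..2*pi} \<in> sets (borel :: (real \<times> real) measure)"
    by (metis borel_prod pair_measureI sets_lborel atLeastAtMost_borel)
  have m: "(\<lambda>p. ennreal (F2 a b c (fst p) (snd p)) * indicator ({0..pi} \<times> {0..2*pi}) p) \<in> borel_measurable lborel"
  proof -
    have "(\<lambda>p. ennreal (F2 a b c (fst p) (snd p))) \<in> borel_measurable borel"
      using borel_measurable_continuous_onI[OF F2_cont[of a b c]] by measurable
    thus ?thesis using Bs by (intro borel_measurable_times_ennreal borel_measurable_indicator) simp_all
  qed
  have ae: "AE p in lborel. ennreal (F2 a b c (fst p) (snd p)) * indicator ({0..pi} \<times> {0..2*pi}) p = 0"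
    using 0 nn_integral_0_iff_AE[OF m] by simp
  define U where "U = {0<..<pi} \<times> {0<..<(2::real)*pi}"
  note U = U_def
  have Us: "U \<in> sets lborel"
    unfolding U_def by (metis borel_prod pair_measureI sets_lborel greaterThanLessThan_borel)
  have "AE p in lborel. p \<notin> U"
    using ae
  proof (rule AE_mp, intro AE_I2 impI)
    fix p :: "real \<times> real"
    assume h: "ennreal (F2 a b c (fst p) (snd p)) * indicator ({0..pi} \<times> {0..2*pi}) p = 0"
    show "p \<notin> U"
    proof
      assume pU: "p \<in> U"
      hence "F2 a b c (fst p) (snd p) > 0" using F2_pos[OF a b c] unfolding U by (cases p) auto
      moreover have "p \<in> {0..pi} \<times> {0..2*pi}" using pU unfolding U by (cases p) auto
      ultimately show False using h by simp
    qed
  qed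
  hence "emeasure lborel U = 0"
    by (subst (asm) AE_iff_measurable[of U]) (use Us in auto)
  moreover have "emeasure lborel U > 0"
  proof -
    have "emeasure lborel U = emeasure (lborel \<Otimes>\<^sub>M lborel) U" by (simp add: lborel_prod)
    also have "\<dots> = emeasure lborel {0<..<pi} * emeasure lborel {0<..<(2::real)*pi}"
      unfolding U_def by (rule lborel.emeasure_pair_measure_Times) simp_all
    also have "\<dots> = ennreal pi * ennreal (2*pi)" by simp
    also have "\<dots> > 0" by (simp add: ennreal_mult''[symmetric] pi_gt_zero)
    finally show ?thesis .
  qed
  ultimately show False by simp
qed




lemma diag3_mult: "diag3 u ** diag3 v = diag3 (\<chi> i. u$i * v$i)"
proof -
  have "(diag3 u ** diag3 v)$i$j = diag3 (\<chi> i. u$i * v$i) $i$j" for i j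
    unfolding diag3_def matrix_matrix_mult_def
    using exhaust_3[of i] exhaust_3[of j] by (auto simp: sum_3)
  thus ?thesis by (simp add: vec_eq_iff)
qed

lemma diag3_mulv: "diag3 u *v x = (\<chi> i. u$i * x$i)"
proof -
  have "(diag3 u *v x)$i = u$i * x$i" for i
    unfolding diag3_def matrix_vector_mult_def
    using exhaust_3[of i] by (auto simp: sum_3)
  thus ?thesis by (simp add: vec_eq_iff)
qed
lemma diag3_one: "diag3 (\<chi> i. 1) = mat 1"
  unfolding diag3_def mat_def by (simp add: vec_eq_iff)

lemma det_diag3: "det (diag3 t) = t$1 * t$2 * t$3"
proof -
  have "det (diag3 t) = prod (\<lambda>i. diag3 t $ i $ i) UNIV"
    by (rule det_diagonal) (simp add: diag3_def)
  also have "\<dots> = prod (\<lambda>i. t $ i) {1,2,3::3}" by (simp add: diag3_def UNIV_3[symmetric])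
  also have "\<dots> = t$1 * t$2 * t$3" by (simp add: mult.assoc)
  finally show ?thesis .
qed

lemma inner3: fixes x u :: "real^3" shows "x \<bullet> (\<chi> i. u$i * x$i) = u$1 * (x$1)\<^sup>2 + u$2 * (x$2)\<^sup>2 + u$3 * (x$3)\<^sup>2"
  by (simp add: inner_vec_def sum_3 power2_eq_square)

lemma matrix_inv_eq:
  fixes A B :: "real^3^3"
  assumes "A ** B = mat 1" "B ** A = mat 1"
  shows "matrix_inv A = B"
proof -
  have ex: "\<exists>A'. A ** A' = mat 1 \<and> A' ** A = mat 1" using assms by blast
  define C where "C = matrix_inv A"
  have C: "A ** C = mat 1 \<and> C ** A = mat 1"
    unfolding C_def matrix_inv_def by (rule someI_ex[OF ex])
  have "C = C ** (A ** B)" by (simp add: assms)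
  also have "\<dots> = (C ** A) ** B" by (simp add: matrix_mul_assoc)
  also have "\<dots> = B" using C by simp
  finally show ?thesis unfolding C_def .
qed

lemma matrix_inv_diag3:
  assumes "t$1 \<noteq> 0" "t$2 \<noteq> 0" "t$3 \<noteq> 0"
  shows "matrix_inv (diag3 t) = diag3 (\<chi> i. 1 / t$i)"
proof (rule matrix_inv_eq)
  have "\<And>i. t$i \<noteq> 0" using assms by (metis exhaust_3)
  thus "diag3 t ** diag3 (\<chi> i. 1 / t$i) = mat 1" "diag3 (\<chi> i. 1 / t$i) ** diag3 t = mat 1"
    by (simp_all add: diag3_mult diag3_one[symmetric])
qed

lemma sp1: "sphere_pt th ph $ 1 = sin th * cos ph" by (simp add: sphere_pt_def)
lemma sp2: "sphere_pt th ph $ 2 = sin th * sin ph" by (simp add: sphere_pt_def)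
lemma sp3: "sphere_pt th ph $ 3 = cos th" by (simp add: sphere_pt_def)

lemma lint_nn:
  fixes F :: "real \<times> real \<Rightarrow> real"
  assumes cont: "continuous_on UNIV F" and nn: "\<And>p. p \<in> {0..pi} \<times> {0..2*pi} \<Longrightarrow> 0 \<le> F p"
  shows "ennreal (LINT p : {0..pi} \<times> {0..2*pi} | lborel. F p)
        = (\<integral>\<^sup>+p. ennreal (F p) * indicator ({0..pi} \<times> {0..2*pi}) p \<partial>lborel)"
    and "0 \<le> (LINT p : {0..pi} \<times> {0..2*pi} | lborel. F p)"
proof -
  let ?B = "{0..pi} \<times> {0..2*pi} :: (real \<times> real) set"
  have cB: "compact ?B" by (intro compact_Times compact_Icc)
  have int: "integrable lborel (\<lambda>p. indicator ?B p *\<^sub>R F p)"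
    by (rule borel_integrable_compact[OF cB continuous_on_subset[OF cont]]) simp
  have nn': "\<And>p. 0 \<le> indicator ?B p *\<^sub>R F p" using nn by (simp add: indicator_def)
  have "(\<integral>\<^sup>+p. ennreal (indicator ?B p *\<^sub>R F p) \<partial>lborel) = integral\<^sup>L lborel (\<lambda>p. indicator ?B p *\<^sub>R F p)"
    by (rule nn_integral_eq_integral[OF int], rule AE_I2) (use nn in \<open>auto simp: indicator_def\<close>)
  moreover have "(\<integral>\<^sup>+p. ennreal (indicator ?B p *\<^sub>R F p) \<partial>lborel) = (\<integral>\<^sup>+p. ennreal (F p) * indicator ?B p \<partial>lborel)"
    by (intro nn_integral_cong) (simp add: indicator_def)
  ultimately show "ennreal (LINT p : ?B | lborel. F p) = (\<integral>\<^sup>+p. ennreal (F p) * indicator ?B p \<partial>lborel)"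
    by (simp add: set_lebesgue_integral_def)
  show "0 \<le> (LINT p : ?B | lborel. F p)"
    unfolding set_lebesgue_integral_def by (rule integral_nonneg_AE, rule AE_I2) (use nn in \<open>auto simp: indicator_def\<close>)
qed




theorem mainTheorem2:
  fixes t :: "real^3" and T :: "real^3^3" and N :: real
  assumes T_def: "T = diag3 t"
    and nz: "t $ 1 * t $ 2 * t $ 3 \<noteq> 0"
    and N_def: "inverse N =
      sphere_integral (\<lambda>n. (n \<bullet> ((matrix_inv T ** matrix_inv T) *v n)) powr (-2))"
  shows "N * \<bar>det T\<bar> * sphere_integral (\<lambda>n. sqrt (n \<bullet> ((T ** T) *v n))) = 1
     \<and> (2 * pi * N * \<bar>det T\<bar> = 1 \<longleftrightarrow>
          sphere_integral (\<lambda>n. sqrt (n \<bullet> ((T ** T) *v n))) = 2 * pi)"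
proof -
  have t1: "t$1 \<noteq> 0" and t2: "t$2 \<noteq> 0" and t3: "t$3 \<noteq> 0" using nz by auto
  define a b c where "a = \<bar>t$1\<bar>" and "b = \<bar>t$2\<bar>" and "c = \<bar>t$3\<bar>"
  have a: "a > 0" and b: "b > 0" and c: "c > 0" using t1 t2 t3 by (auto simp: a_def b_def c_def)
  have a2: "t$1 * t$1 = a\<^sup>2" and b2: "t$2 * t$2 = b\<^sup>2" and c2: "t$3 * t$3 = c\<^sup>2"
    by (simp_all add: a_def b_def c_def power2_eq_square abs_mult_self_eq)
  have TT: "T ** T = diag3 (\<chi> i. t$i * t$i)" unfolding T_def by (rule diag3_mult)
  have Ti: "matrix_inv T ** matrix_inv T = diag3 (\<chi> i. 1 / t$i * (1 / t$i))"
    unfolding T_def matrix_inv_diag3[OF t1 t2 t3] diag3_mult by simp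
  have dT: "\<bar>det T\<bar> = a * b * c"
    unfolding T_def det_diag3 a_def b_def c_def by (simp add: abs_mult)
  let ?B = "{0..pi} \<times> {0..2*pi} :: (real \<times> real) set"
  have f1: "(sphere_pt th ph \<bullet> ((matrix_inv T ** matrix_inv T) *v sphere_pt th ph)) powr (-2) * sin th
      = F1 a b c th ph" for th ph
  proof -
    have "sphere_pt th ph \<bullet> ((matrix_inv T ** matrix_inv T) *v sphere_pt th ph)
       = (sin th * cos ph)\<^sup>2 / a\<^sup>2 + (sin th * sin ph)\<^sup>2 / b\<^sup>2 + (cos th)\<^sup>2 / c\<^sup>2"
      unfolding Ti diag3_mulv inner3 sp1 sp2 sp3
      using a2 b2 c2 by (simp add: field_simps)
    moreover have "(sin th * cos ph)\<^sup>2 / a\<^sup>2 + (sin th * sin ph)\<^sup>2 / b\<^sup>2 + (cos th)\<^sup>2 / c\<^sup>2 > 0"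
      by (rule denom_pos[OF a b c])
    ultimately show ?thesis
      unfolding F1_def by (simp add: powr_minus_divide powr_numeral)
  qed
  have f2: "sqrt (sphere_pt th ph \<bullet> ((T ** T) *v sphere_pt th ph)) * sin th = F2 a b c th ph" for th ph
  proof -
    have "sphere_pt th ph \<bullet> ((T ** T) *v sphere_pt th ph)
       = a\<^sup>2 * (sin th * cos ph)\<^sup>2 + b\<^sup>2 * (sin th * sin ph)\<^sup>2 + c\<^sup>2 * (cos th)\<^sup>2"
      unfolding TT diag3_mulv inner3 sp1 sp2 sp3 using a2 b2 c2 by simp
    thus ?thesis unfolding F2_def by simp
  qed
  define I1 where "I1 = (LINT p : ?B | lborel. F1 a b c (fst p) (snd p))"
  define I2 where "I2 = (LINT p : ?B | lborel. F2 a b c (fst p) (snd p))"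
  have S1: "sphere_integral (\<lambda>n. (n \<bullet> ((matrix_inv T ** matrix_inv T) *v n)) powr (-2)) = I1"
    unfolding sphere_integral_def I1_def by (simp only: f1)
  have S2: "sphere_integral (\<lambda>n. sqrt (n \<bullet> ((T ** T) *v n))) = I2"
    unfolding sphere_integral_def I2_def by (simp only: f2)
  have nn1: "0 \<le> F1 a b c (fst p) (snd p)" if "p \<in> ?B" for p
    using that unfolding F1_def by (auto intro!: divide_nonneg_nonneg sin_ge_zero)
  have nn2: "0 \<le> F2 a b c (fst p) (snd p)" if "p \<in> ?B" for p
    using that unfolding F2_def by (auto intro!: mult_nonneg_nonneg sin_ge_zero)
  note L1 = lint_nn[OF F1_cont[OF a b c] nn1]
  note L2 = lint_nn[OF F2_cont[of a b c] nn2]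
  have abc0: "0 \<le> a * b * c" using a b c by simp
  have "ennreal I1 = ennreal (a * b * c) * ennreal I2"
    unfolding I1_def I2_def using key_nn[OF a b c] L1(1) L2(1) by simp
  also have "\<dots> = ennreal (a * b * c * I2)" using abc0 by (rule ennreal_mult'[symmetric])
  finally have I12: "I1 = a * b * c * I2"
    using L1(2) L2(2) a b c unfolding I1_def I2_def by (simp add: ennreal_inj)
  have I2pos: "I2 > 0"
  proof -
    have "ennreal I2 \<noteq> 0" unfolding I2_def using NN2_pos[OF a b c] L2(1) by simp
    hence "I2 \<noteq> 0" by auto
    with L2(2) show ?thesis unfolding I2_def by simp
  qed
  have abc: "a * b * c > 0" using a b c by simp
  have Ne: "N = 1 / (a * b * c * I2)"
    using N_def unfolding S1 I12 by (metis inverse_inverse_eq inverse_eq_divide)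
  show ?thesis
    unfolding S2 dT Ne using abc I2pos by (auto simp: field_simps)
qed


end
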